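(* For every $n\ge1$ and masses $m_i>0$, the $n$-body problem in ${\bf H}^2$ has no parabolic relative equilibria: there is no solution defined for all $t\in\mathbb R$ of the form $x_i=a_i-b_it+c_it$, $y_i=a_it+b_i(1-t^2/2)+c_it^2/2$, $z_i=a_it-b_it^2/2+c_i(1+t^2/2)$, $i=1,\dots,n$, with real constants $a_i,b_i,c_i$ satisfying $a_i^2+b_i^2-c_i^2=-1$.
   Context: The $n$-body problem in ${\bf H}^2$ (Weierstrass model): with the Lorentz inner product ${\bf a}\boxdot{\bf b}=a_xb_x+a_yb_y-a_zb_z$ on $\mathbb R^3$, ${\bf H}^2=\{(x,y,z): x^2+y^2-z^2=-1,\ z>0\}$. Bodies of masses $m_1,\dots,m_n>0$ have positions ${\bf q}_i=(x_i,y_i,z_i)\in{\bf H}^2$ and satisfy $$\ddot{\bf q}_i=\sum_{j\ne i}\frac{m_j[{\bf q}_j+({\bf q}_i\boxdot{\bf q}_j){\bf q}_i]}{[({\bf q}_i\boxdot{\bf q}_j)^2-1]^{3/2}}+(\dot{\bf q}_i\boxdot\dot{\bf q}_i){\bf q}_i,\qquad {\bf q}_i\boxdot{\bf q}_i=-1,\ \ {\bf q}_i\boxdot\dot{\bf q}_i=0,$$ $i=1,\dots,n$, defined only for collisionless configurations. The angular momentum $\sum_i m_i{\bf q}_i\boxtimes\dot{\bf q}_i$, where ${\bf a}\boxtimes{\bf b}=(a_yb_z-a_zb_y,\ a_zb_x-a_xb_z,\ a_yb_x-a_xb_y)$, is a first integral. *)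

theory Defs
  imports "HOL-Analysis.Analysis"
begin

type_synonym vec3 = "real \<times> real \<times> real"

definition xc :: "vec3 \<Rightarrow> real" where "xc v = fst v"
definition yc :: "vec3 \<Rightarrow> real" where "yc v = fst (snd v)"
definition zc :: "vec3 \<Rightarrow> real" where "zc v = snd (snd v)"

definition lorentz :: "vec3 \<Rightarrow> vec3 \<Rightarrow> real" where
  "lorentz a b = xc a * xc b + yc a * yc b - zc a * zc b"

definition inH2 :: "vec3 \<Rightarrow> bool" where
  "inH2 p \<longleftrightarrow> lorentz p p = -1 \<and> zc p > 0"

definition nbody_solution ::
  "nat \<Rightarrow> (nat \<Rightarrow> real) \<Rightarrow> (nat \<Rightarrow> real \<Rightarrow> vec3) \<Rightarrow> bool" where
  "nbody_solution n m q \<longleftrightarrow>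
    (\<exists>v acc :: nat \<Rightarrow> real \<Rightarrow> vec3. \<forall>t::real.
       (\<forall>i<n. (q i has_vector_derivative v i t) (at t)
            \<and> (v i has_vector_derivative acc i t) (at t)
            \<and> inH2 (q i t)
            \<and> lorentz (q i t) (v i t) = 0)
     \<and> (\<forall>i<n. \<forall>j<n. i \<noteq> j \<longrightarrow> q i t \<noteq> q j t)
     \<and> (\<forall>i<n. acc i t =
           (\<Sum>j\<in>{..<n} - {i}.
              (m j / ((lorentz (q i t) (q j t))\<^sup>2 - 1) powr (3/2))
                *\<^sub>R (q j t + lorentz (q i t) (q j t) *\<^sub>R q i t))
           + lorentz (v i t) (v i t) *\<^sub>R q i t))"

end

theory Submission
  imports Defs "HOL-Library.Product_Plus"
begin

lemma qderiv:
  "((\<lambda>t. (a - b * t + c * t, a * t + b * (1 - t\<^sup>2 / 2) + c * t\<^sup>2 / 2,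
          a * t - b * t\<^sup>2 / 2 + c * (1 + t\<^sup>2 / 2))) has_vector_derivative
     (c - b, a + (c - b) * t, a + (c - b) * t)) (at t)"
proof -
  have e1: "((\<lambda>t. a - b * t + c * t) has_real_derivative (c - b)) (at t)"
    by (auto intro!: derivative_eq_intros)
  have e2: "((\<lambda>t. a * t + b * (1 - t\<^sup>2 / 2) + c * t\<^sup>2 / 2) has_real_derivative (a + (c - b) * t)) (at t)"
    by (auto intro!: derivative_eq_intros simp: algebra_simps)
  have e3: "((\<lambda>t. a * t - b * t\<^sup>2 / 2 + c * (1 + t\<^sup>2 / 2)) has_real_derivative (a + (c - b) * t)) (at t)"
    by (auto intro!: derivative_eq_intros simp: algebra_simps)
  show ?thesis
    using e1 e2 e3
    by (auto intro!: has_vector_derivative_Pair simp: has_real_derivative_iff_has_vector_derivative)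
qed

lemma vderiv:
  "((\<lambda>t. (w, a + w * t, a + w * t)) has_vector_derivative (0, w, w)) (at t)"
proof -
  have e2: "((\<lambda>t. a + w * t) has_real_derivative w) (at t)"
    by (auto intro!: derivative_eq_intros)
  show ?thesis
    using e2
    by (auto intro!: has_vector_derivative_Pair simp: has_real_derivative_iff_has_vector_derivative)
qed

definition C1 :: "vec3 \<Rightarrow> vec3 \<Rightarrow> real" where
  "C1 p r = yc p * zc r - zc p * yc r"

lemma C1_sum: "C1 p (\<Sum>j\<in>S. f j) = (\<Sum>j\<in>S. C1 p (f j))"
  by (simp add: C1_def yc_def zc_def fst_sum snd_sum sum_distrib_left sum_subtractf)

lemma C1_add: "C1 p (r + s) = C1 p r + C1 p s"
  by (simp add: C1_def yc_def zc_def algebra_simps)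

lemma C1_scale: "C1 p (k *\<^sub>R r) = k * C1 p r"
  by (simp add: C1_def yc_def zc_def algebra_simps)

lemma C1_self: "C1 p p = 0"
  by (simp add: C1_def)

lemma C1_anti: "C1 p r = - C1 r p"
  by (simp add: C1_def)

lemma lorentz_sym: "lorentz p r = lorentz r p"
  by (simp add: lorentz_def)

lemma antisym_sum:
  fixes f :: "nat \<Rightarrow> nat \<Rightarrow> real"
  assumes "\<And>i j. f i j = - f j i"
  shows "(\<Sum>i<n. \<Sum>j\<in>{..<n} - {i}. f i j) = 0"
proof -
  have d: "f i i = 0" for i using assms[of i i] by simp
  have ext: "(\<Sum>j\<in>{..<n} - {i}. f i j) = (\<Sum>j<n. f i j)" if "i < n" for i
  proof -
    have "(\<Sum>j<n. f i j) = f i i + (\<Sum>j\<in>{..<n} - {i}. f i j)"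
      using that by (subst sum.remove[of _ i]) auto
    then show ?thesis using d by simp
  qed
  have "(\<Sum>i<n. \<Sum>j\<in>{..<n} - {i}. f i j) = (\<Sum>i<n. \<Sum>j<n. f i j)"
    by (rule sum.cong) (auto simp: ext)
  moreover have "(\<Sum>i<n. \<Sum>j<n. f i j) = (\<Sum>j<n. \<Sum>i<n. f i j)"
    by (rule sum.swap)
  moreover have "(\<Sum>j<n. \<Sum>i<n. f i j) = - (\<Sum>j<n. \<Sum>i<n. f j i)"
  proof -
    have "(\<Sum>j<n. \<Sum>i<n. f i j) = (\<Sum>j<n. \<Sum>i<n. - f j i)"
      by (rule sum.cong[OF refl], rule sum.cong[OF refl], rule assms)
    then show ?thesis by (simp only: sum_negf)
  qed
  ultimately show ?thesis by linarith
qed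

theorem mainTheorem19:
  fixes n :: nat and m :: "nat \<Rightarrow> real"
  assumes "n \<ge> 1" and "\<forall>i<n. m i > 0"
  shows "\<not> (\<exists>a b c :: nat \<Rightarrow> real.
            (\<forall>i<n. (a i)\<^sup>2 + (b i)\<^sup>2 - (c i)\<^sup>2 = -1)
          \<and> nbody_solution n m
              (\<lambda>i t. (a i - b i * t + c i * t,
                      a i * t + b i * (1 - t\<^sup>2 / 2) + c i * t\<^sup>2 / 2,
                      a i * t - b i * t\<^sup>2 / 2 + c i * (1 + t\<^sup>2 / 2))))"
proof
  assume "\<exists>a b c :: nat \<Rightarrow> real.
            (\<forall>i<n. (a i)\<^sup>2 + (b i)\<^sup>2 - (c i)\<^sup>2 = -1)
          \<and> nbody_solution n m
              (\<lambda>i t. (a i - b i * t + c i * t,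
                      a i * t + b i * (1 - t\<^sup>2 / 2) + c i * t\<^sup>2 / 2,
                      a i * t - b i * t\<^sup>2 / 2 + c i * (1 + t\<^sup>2 / 2)))"
  then obtain a b c :: "nat \<Rightarrow> real" where H: "\<forall>i<n. (a i)\<^sup>2 + (b i)\<^sup>2 - (c i)\<^sup>2 = -1"
    and S: "nbody_solution n m
              (\<lambda>i t. (a i - b i * t + c i * t,
                      a i * t + b i * (1 - t\<^sup>2 / 2) + c i * t\<^sup>2 / 2,
                      a i * t - b i * t\<^sup>2 / 2 + c i * (1 + t\<^sup>2 / 2)))"
    by blast
  define q where "q = (\<lambda>i t. (a i - b i * t + c i * t,
                      a i * t + b i * (1 - t\<^sup>2 / 2) + c i * t\<^sup>2 / 2,
                      a i * t - b i * t\<^sup>2 / 2 + c i * (1 + t\<^sup>2 / 2)))"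
  define w where "w = (\<lambda>i. c i - b i)"
  define Q where "Q = (\<lambda>i. (a i, b i, c i))"
  have q0: "q i 0 = Q i" for i by (simp add: q_def Q_def)
  obtain v acc where VA: "\<forall>t::real.
       (\<forall>i<n. (q i has_vector_derivative v i t) (at t)
            \<and> (v i has_vector_derivative acc i t) (at t)
            \<and> inH2 (q i t)
            \<and> lorentz (q i t) (v i t) = 0)
     \<and> (\<forall>i<n. \<forall>j<n. i \<noteq> j \<longrightarrow> q i t \<noteq> q j t)
     \<and> (\<forall>i<n. acc i t =
           (\<Sum>j\<in>{..<n} - {i}.
              (m j / ((lorentz (q i t) (q j t))\<^sup>2 - 1) powr (3/2))
                *\<^sub>R (q j t + lorentz (q i t) (q j t) *\<^sub>R q i t))
           + lorentz (v i t) (v i t) *\<^sub>R q i t)"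
    using S unfolding nbody_solution_def q_def[symmetric] by blast
  have vv: "v i = (\<lambda>t. (w i, a i + w i * t, a i + w i * t))" if "i < n" for i
  proof
    fix t
    have "(q i has_vector_derivative v i t) (at t)" using VA[rule_format, of t] that by blast
    moreover have "(q i has_vector_derivative (w i, a i + w i * t, a i + w i * t)) (at t)"
      unfolding q_def w_def by (rule qderiv)
    ultimately show "v i t = (w i, a i + w i * t, a i + w i * t)"
      by (rule vector_derivative_unique_at)
  qed
  have acc0: "acc i 0 = (0, w i, w i)" if "i < n" for i
  proof -
    have "(v i has_vector_derivative acc i 0) (at 0)" using VA[rule_format, of 0] that by blast
    then have "((\<lambda>t. (w i, a i + w i * t, a i + w i * t)) has_vector_derivative acc i 0) (at 0)"
      using vv[OF that] by simp
    then show ?thesis using vderiv vector_derivative_unique_at by blast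
  qed
  define K where "K = (\<lambda>i j. m j / ((lorentz (Q i) (Q j))\<^sup>2 - 1) powr (3/2))"
  have eq: "- (w i)\<^sup>2 = (\<Sum>j\<in>{..<n} - {i}. K i j * C1 (Q i) (Q j))" if "i < n" for i
  proof -
    have "acc i 0 = (\<Sum>j\<in>{..<n} - {i}. K i j *\<^sub>R (Q j + lorentz (Q i) (Q j) *\<^sub>R Q i))
           + lorentz (v i 0) (v i 0) *\<^sub>R Q i"
      using conjunct2[OF conjunct2[OF VA[rule_format, of 0]]] that unfolding q0 K_def by blast
    then have "C1 (Q i) (acc i 0) = (\<Sum>j\<in>{..<n} - {i}. K i j * C1 (Q i) (Q j))"
      by (simp add: C1_sum C1_add C1_scale C1_self)
    moreover have "C1 (Q i) (acc i 0) = - (w i)\<^sup>2"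
      using acc0[OF that] by (simp add: C1_def Q_def yc_def zc_def w_def power2_eq_square algebra_simps)
    ultimately show ?thesis by simp
  qed
  have "(\<Sum>i<n. m i * (- (w i)\<^sup>2)) = (\<Sum>i<n. \<Sum>j\<in>{..<n} - {i}. m i * K i j * C1 (Q i) (Q j))"
    by (rule sum.cong) (auto simp: eq sum_distrib_left mult.assoc)
  also have "\<dots> = 0"
  proof (rule antisym_sum)
    fix i j
    show "m i * K i j * C1 (Q i) (Q j) = - (m j * K j i * C1 (Q j) (Q i))"
      by (simp add: K_def lorentz_sym[of "Q i" "Q j"] C1_anti[of "Q i" "Q j"])
  qed
  finally have "(\<Sum>i<n. m i * (w i)\<^sup>2) = 0"
    by (simp add: sum_negf)
  moreover have "\<forall>i\<in>{..<n}. 0 \<le> m i * (w i)\<^sup>2" using assms(2) by auto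
  ultimately have "\<forall>i\<in>{..<n}. m i * (w i)\<^sup>2 = 0"
    using sum_nonneg_eq_0_iff[of "{..<n}" "\<lambda>i. m i * (w i)\<^sup>2"] by auto
  then have "m 0 * (w 0)\<^sup>2 = 0" using assms(1) by auto
  then have "w 0 = 0" using assms by auto
  then have "c 0 = b 0" by (simp add: w_def)
  then have "(a 0)\<^sup>2 = -1" using H assms(1) by force
  moreover have "(a 0)\<^sup>2 \<ge> 0" by simp
  ultimately show False by linarith
qed

end
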